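(* Let $(M,g)$ be a closed Riemannian manifold of dimension $d\in\{2,3\}$ and $Q\subseteq M$ finite with $N=\#Q$. Assume: (a) for every $q\in Q$, $\gamma\in(0,1)$ and $\varepsilon>0$ there is $\Lambda>1$ with $\big|\sum_{X<\lambda\le X+\gamma}Z_\lambda^q(q)-\frac{\mathrm{vol}(B^d)}{(2\pi)^d}d\gamma X^{d-1}\big|\le\varepsilon\gamma X^{d-1}$ for all $X\ge\Lambda$; (b) for every $\gamma>0$ and $\varepsilon>0$ there is $\Lambda_{\gamma,\varepsilon}>1$ with $|Z(q,p;X+\gamma)-Z(q,p;X)|\le\varepsilon\gamma X^{d-1}$ for all $p\ne q$ in $Q$ and $X\ge\Lambda_{\gamma,\varepsilon}$. Then there exist $\varepsilon>0$ and $C>0$ such that for every $\gamma\in(0,1)$ there is $\Lambda_{\gamma,\varepsilon}>1$ with, for every $\beta=(\beta_q)\in\mathbb{C}^N$, $$\varepsilon\gamma\Big[\sum_{q\in Q}|\beta_q|^2\Big]X^{d-1}\le\sum_{X<\lambda\le X+\gamma}\Big\|\sum_{q\in Q}\beta_qZ_\lambda^q\Big\|_{L^2(M)}^2\le C\gamma\Big[\sum_{q\in Q}|\beta_q|^2\Big]X^{d-1}\qquad\forall X\ge\Lambda_{\gamma,\varepsilon}.$$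
   Context: $\Delta$ is the positive Laplace–Beltrami operator; sums over $\lambda$ run over $\mathrm{Spec}(\sqrt\Delta)$; $Z_\lambda^q$ is the unique element of $\ker(\sqrt\Delta-\lambda)$ with $u(q)=\langle Z_\lambda^q,u\rangle_{L^2}$ on that eigenspace; $Z(q,p;X)=\sum_{\lambda\le X}Z_\lambda^q(p)$. $B^d$ is the unit ball of $\mathbb{R}^d$. *)

theory Defs
  imports "HOL-Analysis.Analysis"
begin

text \<open>The manifold is the measure space mu (Riemannian volume); S is the spectrum of
  sqrt Delta; E lam is the eigenspace ker(sqrt Delta - lam), a space of
  complex-valued square-integrable functions; Zk lam q is the reproducing
  element of E lam at the point q.\<close>

definition l2_inner :: "'m measure \<Rightarrow> ('m \<Rightarrow> complex) \<Rightarrow> ('m \<Rightarrow> complex) \<Rightarrow> complex" where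
  "l2_inner mu f g = (\<integral>x. cnj (f x) * g x \<partial>mu)"

definition l2_norm_sq :: "'m measure \<Rightarrow> ('m \<Rightarrow> complex) \<Rightarrow> real" where
  "l2_norm_sq mu f = (\<integral>x. (cmod (f x))\<^sup>2 \<partial>mu)"

definition square_integrable :: "'m measure \<Rightarrow> ('m \<Rightarrow> complex) \<Rightarrow> bool" where
  "square_integrable mu f \<longleftrightarrow> f \<in> borel_measurable mu \<and> integrable mu (\<lambda>x. (cmod (f x))\<^sup>2)"

definition spectral_data ::
  "'m measure \<Rightarrow> real set \<Rightarrow> (real \<Rightarrow> ('m \<Rightarrow> complex) set) \<Rightarrow> (real \<Rightarrow> 'm \<Rightarrow> 'm \<Rightarrow> complex) \<Rightarrow> bool" where
  "spectral_data mu S E Zk \<longleftrightarrow>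
     finite_measure mu \<and>
     S \<subseteq> {0..} \<and> (\<forall>X. finite (S \<inter> {..X})) \<and>
     (\<forall>lam\<in>S.
        E lam \<subseteq> {f. square_integrable mu f} \<and>
        (\<lambda>x. 0) \<in> E lam \<and>
        (\<forall>f\<in>E lam. \<forall>g\<in>E lam. (\<lambda>x. f x + g x) \<in> E lam) \<and>
        (\<forall>c. \<forall>f\<in>E lam. (\<lambda>x. c * f x) \<in> E lam) \<and>
        (\<exists>f\<in>E lam. \<exists>x\<in>space mu. f x \<noteq> 0) \<and>
        (\<forall>q\<in>space mu. Zk lam q \<in> E lam \<and>
            (\<forall>u\<in>E lam. u q = l2_inner mu (Zk lam q) u)))"

definition Zcount :: "real set \<Rightarrow> (real \<Rightarrow> 'm \<Rightarrow> 'm \<Rightarrow> complex) \<Rightarrow> 'm \<Rightarrow> 'm \<Rightarrow> real \<Rightarrow> complex" where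
  "Zcount S Zk q p X = (\<Sum>lam\<in>{lam\<in>S. lam \<le> X}. Zk lam q p)"

definition window :: "real set \<Rightarrow> real \<Rightarrow> real \<Rightarrow> real set" where
  "window S X gamma = {lam\<in>S. X < lam \<and> lam \<le> X + gamma}"

end

theory Submission
  imports Defs
begin


lemma sq_int_prod:
  assumes f: "square_integrable mu f" and g: "square_integrable mu g"
  shows "integrable mu (\<lambda>x. cnj (f x) * g x)"
proof (rule Bochner_Integration.integrable_bound)
  show "integrable mu (\<lambda>x. (cmod (f x))\<^sup>2 + (cmod (g x))\<^sup>2)"
    using f g unfolding square_integrable_def by auto
  have fm: "f \<in> borel_measurable mu" and gm: "g \<in> borel_measurable mu"
    using f g unfolding square_integrable_def by auto
  have cm: "(\<lambda>x. cnj (f x)) \<in> borel_measurable mu"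
    by (rule borel_measurable_continuous_on[OF _ fm]) (intro continuous_intros)
  show "(\<lambda>x. cnj (f x) * g x) \<in> borel_measurable mu"
    using cm gm by (rule borel_measurable_times)
  show "AE x in mu. norm (cnj (f x) * g x) \<le> norm ((cmod (f x))\<^sup>2 + (cmod (g x))\<^sup>2)"
  proof (intro AE_I2)
    fix x
    have "norm (cnj (f x) * g x) = cmod (f x) * cmod (g x)" by (simp add: norm_mult)
    also have "\<dots> \<le> (cmod (f x))\<^sup>2 + (cmod (g x))\<^sup>2"
      using sum_squares_bound[of "cmod (f x)" "cmod (g x)"]
        mult_nonneg_nonneg[OF norm_ge_zero norm_ge_zero, of "f x" "g x"] unfolding mult.assoc by linarith
    also have "\<dots> = norm ((cmod (f x))\<^sup>2 + (cmod (g x))\<^sup>2)" by simp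
    finally show "norm (cnj (f x) * g x) \<le> norm ((cmod (f x))\<^sup>2 + (cmod (g x))\<^sup>2)" .
  qed
qed

lemma inner_self: "l2_inner mu f f = complex_of_real (l2_norm_sq mu f)"
proof -
  have eq: "(\<lambda>x. cnj (f x) * f x) = (\<lambda>x. complex_of_real ((cmod (f x))\<^sup>2))"
    by (rule ext) (metis complex_norm_square mult.commute of_real_power)
  show ?thesis unfolding l2_inner_def l2_norm_sq_def by (simp only: eq integral_complex_of_real)
qed

lemma E_sum:
  assumes sd: "spectral_data mu S E Zk" and lam: "lam \<in> S" and F: "finite F" "F \<subseteq> space mu"
  shows "(\<lambda>x. \<Sum>q\<in>F. beta q * Zk lam q x) \<in> E lam"
  using F
proof (induction F rule: finite_induct)
  case empty then show ?case using sd lam unfolding spectral_data_def by simp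
next
  case (insert q F)
  have z: "Zk lam q \<in> E lam" using sd lam insert unfolding spectral_data_def by auto
  have 1: "(\<lambda>x. beta q * Zk lam q x) \<in> E lam" using sd lam z unfolding spectral_data_def by blast
  have 2: "(\<lambda>x. \<Sum>q\<in>F. beta q * Zk lam q x) \<in> E lam" using insert by auto
  have cl: "\<forall>f\<in>E lam. \<forall>g\<in>E lam. (\<lambda>x. f x + g x) \<in> E lam"
    using sd lam unfolding spectral_data_def by blast
  have "(\<lambda>x. beta q * Zk lam q x + (\<Sum>q\<in>F. beta q * Zk lam q x)) \<in> E lam"
    using cl[rule_format, OF 1 2] by simp
  then show ?case using insert by simp
qed

lemma inner_lin:
  assumes sd: "spectral_data mu S E Zk" and lam: "lam \<in> S" and F: "finite F" "F \<subseteq> space mu"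
    and f: "f \<in> E lam"
  shows "l2_inner mu (\<lambda>x. \<Sum>q\<in>F. beta q * Zk lam q x) f = (\<Sum>q\<in>F. cnj (beta q) * f q)"
proof -
  have sqf: "square_integrable mu f" using sd lam f unfolding spectral_data_def by auto
  have zq: "\<And>q. q \<in> F \<Longrightarrow> Zk lam q \<in> E lam \<and> l2_inner mu (Zk lam q) f = f q"
    using sd lam f F unfolding spectral_data_def by auto
  have int: "\<And>q. q \<in> F \<Longrightarrow> integrable mu (\<lambda>x. cnj (beta q) * (cnj (Zk lam q x) * f x))"
  proof -
    fix q assume q: "q \<in> F"
    have "square_integrable mu (Zk lam q)" using zq[OF q] sd lam unfolding spectral_data_def by auto
    then show "integrable mu (\<lambda>x. cnj (beta q) * (cnj (Zk lam q x) * f x))"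
      using sq_int_prod[OF _ sqf] by (intro integrable_mult_right) auto
  qed
  have "l2_inner mu (\<lambda>x. \<Sum>q\<in>F. beta q * Zk lam q x) f
      = (\<integral>x. (\<Sum>q\<in>F. cnj (beta q) * (cnj (Zk lam q x) * f x)) \<partial>mu)"
    unfolding l2_inner_def by (simp add: sum_distrib_right mult.assoc)
  also have "\<dots> = (\<Sum>q\<in>F. \<integral>x. cnj (beta q) * (cnj (Zk lam q x) * f x) \<partial>mu)"
    by (rule Bochner_Integration.integral_sum) (use int in auto)
  also have "\<dots> = (\<Sum>q\<in>F. cnj (beta q) * f q)"
    using zq by (intro sum.cong) (auto simp: l2_inner_def)
  finally show ?thesis .
qed


lemma norm_expand:
  assumes sd: "spectral_data mu S E Zk" and lam: "lam \<in> S" and F: "finite F" "F \<subseteq> space mu"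
  shows "complex_of_real (l2_norm_sq mu (\<lambda>x. \<Sum>q\<in>F. beta q * Zk lam q x))
       = (\<Sum>q\<in>F. \<Sum>p\<in>F. cnj (beta q) * beta p * Zk lam p q)"
proof -
  have "complex_of_real (l2_norm_sq mu (\<lambda>x. \<Sum>q\<in>F. beta q * Zk lam q x))
      = l2_inner mu (\<lambda>x. \<Sum>q\<in>F. beta q * Zk lam q x) (\<lambda>x. \<Sum>q\<in>F. beta q * Zk lam q x)"
    by (simp add: inner_self)
  also have "\<dots> = (\<Sum>q\<in>F. cnj (beta q) * (\<Sum>p\<in>F. beta p * Zk lam p q))"
    by (rule inner_lin[OF sd lam F E_sum[OF sd lam F]])
  also have "\<dots> = (\<Sum>q\<in>F. \<Sum>p\<in>F. cnj (beta q) * beta p * Zk lam p q)"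
    by (simp add: sum_distrib_left mult.assoc)
  finally show ?thesis .
qed

lemma window_Z:
  assumes sd: "spectral_data mu S E Zk" and g: "gamma > 0"
  shows "finite (window S X gamma)" "window S X gamma \<subseteq> S"
    "(\<Sum>lam\<in>window S X gamma. Zk lam p q) = Zcount S Zk p q (X + gamma) - Zcount S Zk p q X"
proof -
  have fin: "\<And>Y. finite {lam\<in>S. lam \<le> Y}"
  proof -
    fix Y
    have "finite (S \<inter> {..Y})" using sd unfolding spectral_data_def by blast
    moreover have "{lam\<in>S. lam \<le> Y} = S \<inter> {..Y}" by auto
    ultimately show "finite {lam\<in>S. lam \<le> Y}" by simp
  qed
  have eq: "{lam\<in>S. lam \<le> X + gamma} = window S X gamma \<union> {lam\<in>S. lam \<le> X}"
    using g unfolding window_def by auto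
  have sub: "window S X gamma \<subseteq> {lam\<in>S. lam \<le> X + gamma}" unfolding window_def by auto
  show f: "finite (window S X gamma)" using finite_subset[OF sub fin] .
  show "window S X gamma \<subseteq> S" unfolding window_def by auto
  have "Zcount S Zk p q (X + gamma) = (\<Sum>lam\<in>window S X gamma. Zk lam p q) + Zcount S Zk p q X"
    unfolding Zcount_def eq
    by (rule sum.union_disjoint) (use f fin in \<open>auto simp: window_def\<close>)
  then show "(\<Sum>lam\<in>window S X gamma. Zk lam p q) = Zcount S Zk p q (X + gamma) - Zcount S Zk p q X"
    by simp
qed

lemma est:
  fixes G :: "'a \<Rightarrow> 'a \<Rightarrow> complex" and beta :: "'a \<Rightarrow> complex"
  assumes Q: "finite Q"
    and diag: "\<And>q. q \<in> Q \<Longrightarrow> cmod (G q q - complex_of_real A) \<le> e0 * K"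
    and off: "\<And>p q. p \<in> Q \<Longrightarrow> q \<in> Q \<Longrightarrow> p \<noteq> q \<Longrightarrow> cmod (G p q) \<le> e1 * K"
    and e: "e0 \<ge> 0" "e1 \<ge> 0" "K \<ge> 0"
  shows "cmod ((\<Sum>q\<in>Q. \<Sum>p\<in>Q. cnj (beta q) * beta p * G p q)
            - complex_of_real (A * (\<Sum>q\<in>Q. (cmod (beta q))\<^sup>2)))
         \<le> (e0 + real (card Q) * e1) * K * (\<Sum>q\<in>Q. (cmod (beta q))\<^sup>2)"
proof -
  define B where "B = (\<Sum>q\<in>Q. (cmod (beta q))\<^sup>2)"
  have cc: "\<And>q. cnj (beta q) * beta q = complex_of_real ((cmod (beta q))\<^sup>2)"
    by (metis complex_norm_square mult.commute of_real_power)
  have split: "\<And>q. q \<in> Q \<Longrightarrow> (\<Sum>p\<in>Q. cnj (beta q) * beta p * G p q)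
      = cnj (beta q) * beta q * G q q + (\<Sum>p\<in>Q-{q}. cnj (beta q) * beta p * G p q)"
    using Q by (simp add: sum.remove)
  have AB: "complex_of_real (A * B) = (\<Sum>q\<in>Q. complex_of_real ((cmod (beta q))\<^sup>2) * complex_of_real A)"
    unfolding B_def by (simp add: sum_distrib_left sum_distrib_right mult.commute)
  have "(\<Sum>q\<in>Q. \<Sum>p\<in>Q. cnj (beta q) * beta p * G p q) - complex_of_real (A * B)
     = (\<Sum>q\<in>Q. complex_of_real ((cmod (beta q))\<^sup>2) * (G q q - complex_of_real A)
          + (\<Sum>p\<in>Q-{q}. cnj (beta q) * beta p * G p q))"
    unfolding AB sum_subtractf[symmetric]
  proof (rule sum.cong[OF refl])
    fix q assume q: "q \<in> Q"
    show "(\<Sum>p\<in>Q. cnj (beta q) * beta p * G p q) - complex_of_real ((cmod (beta q))\<^sup>2) * complex_of_real A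
      = complex_of_real ((cmod (beta q))\<^sup>2) * (G q q - complex_of_real A)
          + (\<Sum>p\<in>Q-{q}. cnj (beta q) * beta p * G p q)"
      unfolding split[OF q] cc by (simp add: algebra_simps)
  qed
  also have "cmod \<dots> \<le> (\<Sum>q\<in>Q. (cmod (beta q))\<^sup>2 * (e0 * K)
          + (\<Sum>p\<in>Q. cmod (beta q) * cmod (beta p) * (e1 * K)))"
  proof (rule order_trans[OF norm_sum sum_mono])
    fix q assume q: "q \<in> Q"
    have 1: "cmod (complex_of_real ((cmod (beta q))\<^sup>2) * (G q q - complex_of_real A))
        \<le> (cmod (beta q))\<^sup>2 * (e0 * K)"
      using diag[OF q] unfolding norm_mult norm_of_real
      by (simp add: mult_left_mono del: of_real_power)
    have 2: "cmod (\<Sum>p\<in>Q-{q}. cnj (beta q) * beta p * G p q)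
        \<le> (\<Sum>p\<in>Q-{q}. cmod (beta q) * cmod (beta p) * (e1 * K))"
      by (rule order_trans[OF norm_sum sum_mono])
         (use off q in \<open>auto simp: norm_mult intro!: mult_left_mono\<close>)
    have 3: "(\<Sum>p\<in>Q-{q}. cmod (beta q) * cmod (beta p) * (e1 * K))
        \<le> (\<Sum>p\<in>Q. cmod (beta q) * cmod (beta p) * (e1 * K))"
      by (rule sum_mono2) (use Q e in auto)
    show "cmod (complex_of_real ((cmod (beta q))\<^sup>2) * (G q q - complex_of_real A)
          + (\<Sum>p\<in>Q-{q}. cnj (beta q) * beta p * G p q))
        \<le> (cmod (beta q))\<^sup>2 * (e0 * K) + (\<Sum>p\<in>Q. cmod (beta q) * cmod (beta p) * (e1 * K))"
      by (rule order_trans[OF norm_triangle_ineq]) (use 1 2 3 in linarith)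
  qed
  also have "\<dots> = e0 * K * B + e1 * K * (\<Sum>q\<in>Q. \<Sum>p\<in>Q. cmod (beta q) * cmod (beta p))"
    unfolding B_def by (simp add: sum.distrib sum_distrib_left sum_distrib_right algebra_simps)
  also have "(\<Sum>q\<in>Q. \<Sum>p\<in>Q. cmod (beta q) * cmod (beta p))
      \<le> (\<Sum>q\<in>Q. \<Sum>p\<in>Q. ((cmod (beta q))\<^sup>2 + (cmod (beta p))\<^sup>2) / 2)"
  proof (rule sum_mono, rule sum_mono)
    fix q p
    show "cmod (beta q) * cmod (beta p) \<le> ((cmod (beta q))\<^sup>2 + (cmod (beta p))\<^sup>2) / 2"
      using sum_squares_bound[of "cmod (beta q)" "cmod (beta p)"] by (simp add: field_simps)
  qed
  also have "\<dots> = real (card Q) * B"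
    unfolding B_def
    by (simp add: sum.distrib add_divide_distrib sum_divide_distrib[symmetric]
        sum.swap[of _ Q Q] sum_distrib_left)
  finally have "cmod ((\<Sum>q\<in>Q. \<Sum>p\<in>Q. cnj (beta q) * beta p * G p q) - complex_of_real (A * B))
      \<le> e0 * K * B + e1 * K * (real (card Q) * B)"
    using e by (simp add: mult_left_mono)
  then show ?thesis unfolding B_def[symmetric] by (simp add: algebra_simps)
qed


theorem lemma3p6:
  fixes mu :: "'m measure" and S :: "real set" and E :: "real \<Rightarrow> ('m \<Rightarrow> complex) set"
    and Zk :: "real \<Rightarrow> 'm \<Rightarrow> 'm \<Rightarrow> complex" and d :: nat and Q :: "'m set"
  assumes sd: "spectral_data mu S E Zk"
    and d: "d \<in> {2, 3}"
    and Q: "finite Q" "Q \<subseteq> space mu"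
    and a: "\<And>q gamma eps. q \<in> Q \<Longrightarrow> 0 < gamma \<Longrightarrow> gamma < 1 \<Longrightarrow> eps > 0 \<Longrightarrow>
              \<exists>Lam>1. \<forall>X\<ge>Lam.
                cmod ((\<Sum>lam\<in>window S X gamma. Zk lam q q)
                      - complex_of_real (unit_ball_vol (real d) / (2 * pi) ^ d * real d * gamma * X ^ (d - 1)))
                \<le> eps * gamma * X ^ (d - 1)"
    and b: "\<And>gamma eps. gamma > 0 \<Longrightarrow> eps > 0 \<Longrightarrow>
              \<exists>Lam>1. \<forall>p\<in>Q. \<forall>q\<in>Q. p \<noteq> q \<longrightarrow> (\<forall>X\<ge>Lam.
                cmod (Zcount S Zk q p (X + gamma) - Zcount S Zk q p X) \<le> eps * gamma * X ^ (d - 1))"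
  shows "\<exists>eps>0. \<exists>C>0. \<forall>gamma. 0 < gamma \<and> gamma < 1 \<longrightarrow>
           (\<exists>Lam>1. \<forall>beta :: 'm \<Rightarrow> complex. \<forall>X\<ge>Lam.
              eps * gamma * (\<Sum>q\<in>Q. (cmod (beta q))\<^sup>2) * X ^ (d - 1)
                \<le> (\<Sum>lam\<in>window S X gamma. l2_norm_sq mu (\<lambda>x. \<Sum>q\<in>Q. beta q * Zk lam q x))
              \<and> (\<Sum>lam\<in>window S X gamma. l2_norm_sq mu (\<lambda>x. \<Sum>q\<in>Q. beta q * Zk lam q x))
                \<le> C * gamma * (\<Sum>q\<in>Q. (cmod (beta q))\<^sup>2) * X ^ (d - 1))"
proof -
  define c where "c = unit_ball_vol (real d) / (2 * pi) ^ d * real d"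
  have d1: "d \<ge> 1" using d by auto
  have cpos: "c > 0" unfolding c_def using d1 by (intro mult_pos_pos divide_pos_pos) auto
  define N where "N = card Q"
  define e0 where "e0 = c / 4"
  define e1 where "e1 = c / (4 * (real N + 1))"
  have e0pos: "e0 > 0" and e1pos: "e1 > 0" using cpos by (auto simp: e0_def e1_def)
  have ebound: "e0 + real N * e1 \<le> c / 2"
  proof -
    have "real N * e1 = c / 4 * (real N / (real N + 1))" by (simp add: e1_def field_simps)
    also have "\<dots> \<le> c / 4 * 1" using cpos by (intro mult_left_mono) auto
    finally show ?thesis by (simp add: e0_def)
  qed
  have c2: "c / 2 > 0" and c3: "2 * c > 0" using cpos by auto
  have main: "\<forall>gamma. 0 < gamma \<and> gamma < 1 \<longrightarrow>
           (\<exists>Lam>1. \<forall>beta :: 'm \<Rightarrow> complex. \<forall>X\<ge>Lam.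
              c / 2 * gamma * (\<Sum>q\<in>Q. (cmod (beta q))\<^sup>2) * X ^ (d - 1)
                \<le> (\<Sum>lam\<in>window S X gamma. l2_norm_sq mu (\<lambda>x. \<Sum>q\<in>Q. beta q * Zk lam q x))
              \<and> (\<Sum>lam\<in>window S X gamma. l2_norm_sq mu (\<lambda>x. \<Sum>q\<in>Q. beta q * Zk lam q x))
                \<le> 2 * c * gamma * (\<Sum>q\<in>Q. (cmod (beta q))\<^sup>2) * X ^ (d - 1))"
  proof (intro allI impI)
    fix gamma :: real assume g: "0 < gamma \<and> gamma < 1"
    have "\<forall>q\<in>Q. \<exists>Lam. Lam > 1 \<and> (\<forall>X\<ge>Lam.
                cmod ((\<Sum>lam\<in>window S X gamma. Zk lam q q)
                      - complex_of_real (c * gamma * X ^ (d - 1)))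
                \<le> e0 * gamma * X ^ (d - 1))"
    proof
      fix q assume q: "q \<in> Q"
      show "\<exists>Lam. Lam > 1 \<and> (\<forall>X\<ge>Lam.
                cmod ((\<Sum>lam\<in>window S X gamma. Zk lam q q)
                      - complex_of_real (c * gamma * X ^ (d - 1)))
                \<le> e0 * gamma * X ^ (d - 1))"
        unfolding c_def using g e0pos by (intro a[OF q]) auto
    qed
    from bchoice[OF this] obtain La where La: "\<forall>q\<in>Q. La q > 1 \<and> (\<forall>X\<ge>La q.
                cmod ((\<Sum>lam\<in>window S X gamma. Zk lam q q)
                      - complex_of_real (c * gamma * X ^ (d - 1)))
                \<le> e0 * gamma * X ^ (d - 1))" ..
    obtain Lb where Lb1: "Lb > 1" and Lb2: "\<forall>p\<in>Q. \<forall>q\<in>Q. p \<noteq> q \<longrightarrow> (\<forall>X\<ge>Lb.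
                cmod (Zcount S Zk q p (X + gamma) - Zcount S Zk q p X) \<le> e1 * gamma * X ^ (d - 1))"
      using b[of gamma e1] g e1pos by (elim exE conjE) auto
    have Lb: "Lb > 1" "\<And>p q X. p \<in> Q \<Longrightarrow> q \<in> Q \<Longrightarrow> p \<noteq> q \<Longrightarrow> X \<ge> Lb \<Longrightarrow>
                cmod (Zcount S Zk q p (X + gamma) - Zcount S Zk q p X) \<le> e1 * gamma * X ^ (d - 1)"
      using Lb1 Lb2 by auto
    define Lam where "Lam = max Lb (Max (insert 1 (La ` Q)))"
    show "\<exists>Lam>1. \<forall>beta :: 'm \<Rightarrow> complex. \<forall>X\<ge>Lam.
              c / 2 * gamma * (\<Sum>q\<in>Q. (cmod (beta q))\<^sup>2) * X ^ (d - 1)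
                \<le> (\<Sum>lam\<in>window S X gamma. l2_norm_sq mu (\<lambda>x. \<Sum>q\<in>Q. beta q * Zk lam q x))
              \<and> (\<Sum>lam\<in>window S X gamma. l2_norm_sq mu (\<lambda>x. \<Sum>q\<in>Q. beta q * Zk lam q x))
                \<le> 2 * c * gamma * (\<Sum>q\<in>Q. (cmod (beta q))\<^sup>2) * X ^ (d - 1)"
    proof (intro exI[of _ Lam] conjI allI impI)
      show "Lam > 1" using Lb unfolding Lam_def by auto
      fix beta :: "'m \<Rightarrow> complex" and X :: real assume X: "X \<ge> Lam"
      have XLb: "X \<ge> Lb" using X unfolding Lam_def by auto
      have XLa: "X \<ge> La q" if "q \<in> Q" for q
      proof -
        have "La q \<le> Max (insert 1 (La ` Q))" using Q(1) that by (intro Max_ge) auto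
        then show ?thesis using X unfolding Lam_def by auto
      qed
      have Xpos: "X > 0" using XLb Lb by auto
      define K where "K = gamma * X ^ (d - 1)"
      have Kpos: "K \<ge> 0" using g Xpos unfolding K_def by auto
      define B where "B = (\<Sum>q\<in>Q. (cmod (beta q))\<^sup>2)"
      have Bpos: "B \<ge> 0" unfolding B_def by (intro sum_nonneg) auto
      define W where "W = window S X gamma"
      define G where "G = (\<lambda>p q. \<Sum>lam\<in>W. Zk lam p q)"
      define T where "T = (\<Sum>lam\<in>W. l2_norm_sq mu (\<lambda>x. \<Sum>q\<in>Q. beta q * Zk lam q x))"
      have Wfin: "finite W" and WS: "W \<subseteq> S" using window_Z[OF sd, where gamma=gamma and X=X] g unfolding W_def by auto
      have "complex_of_real T = (\<Sum>lam\<in>W. \<Sum>q\<in>Q. \<Sum>p\<in>Q. cnj (beta q) * beta p * Zk lam p q)"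
        unfolding T_def of_real_sum using WS by (intro sum.cong[OF refl] norm_expand[OF sd _ Q]) auto
      also have "\<dots> = (\<Sum>q\<in>Q. \<Sum>p\<in>Q. cnj (beta q) * beta p * G p q)"
        unfolding G_def sum_distrib_left
        by (subst sum.swap, rule sum.cong[OF refl], rule sum.swap)
      finally have Teq: "complex_of_real T = (\<Sum>q\<in>Q. \<Sum>p\<in>Q. cnj (beta q) * beta p * G p q)" .
      have diag: "cmod (G q q - complex_of_real (c * K)) \<le> e0 * K" if "q \<in> Q" for q
        using La that XLa[OF that] unfolding G_def W_def K_def mult.assoc by blast
      have off: "cmod (G p q) \<le> e1 * K" if "p \<in> Q" "q \<in> Q" "p \<noteq> q" for p q
      proof -
        have "G p q = Zcount S Zk p q (X + gamma) - Zcount S Zk p q X"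
          unfolding G_def W_def using window_Z[OF sd, where gamma=gamma and X=X] g by auto
        moreover have "cmod (Zcount S Zk p q (X + gamma) - Zcount S Zk p q X) \<le> e1 * gamma * X ^ (d - 1)"
          using Lb2[rule_format, of q p X] that XLb by auto
        ultimately show ?thesis unfolding K_def mult.assoc by simp
      qed
      have "cmod ((\<Sum>q\<in>Q. \<Sum>p\<in>Q. cnj (beta q) * beta p * G p q)
            - complex_of_real (c * K * B)) \<le> (e0 + real (card Q) * e1) * K * B"
        unfolding B_def by (rule est[OF Q(1) diag off]) (use e0pos e1pos Kpos in auto)
      then have "\<bar>T - c * K * B\<bar> \<le> (e0 + real N * e1) * K * B"
        unfolding Teq[symmetric] N_def of_real_diff[symmetric] norm_of_real .
      moreover have "(e0 + real N * e1) * K * B \<le> c / 2 * K * B"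
        using ebound Kpos Bpos by (intro mult_right_mono) auto
      ultimately have TT: "\<bar>T - c * (K * B)\<bar> \<le> c / 2 * (K * B)" by (simp add: mult.assoc)
      have KB: "K * B \<ge> 0" using Kpos Bpos by simp
      have e1': "c / 2 * gamma * B * X ^ (d - 1) = c / 2 * (K * B)" unfolding K_def by simp
      have e2': "2 * c * gamma * B * X ^ (d - 1) = 2 * c * (K * B)" unfolding K_def by simp
      have l: "c * (K * B) - c / 2 * (K * B) = c / 2 * (K * B)" by simp
      have u: "c * (K * B) + c / 2 * (K * B) \<le> 2 * c * (K * B)"
        using mult_nonneg_nonneg[OF less_imp_le[OF cpos] KB] by linarith
      have lo: "c / 2 * (K * B) \<le> T" using TT l unfolding abs_le_iff by linarith
      have hi: "T \<le> 2 * c * (K * B)" using TT u unfolding abs_le_iff by linarith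
      show "c / 2 * gamma * (\<Sum>q\<in>Q. (cmod (beta q))\<^sup>2) * X ^ (d - 1)
                \<le> (\<Sum>lam\<in>window S X gamma. l2_norm_sq mu (\<lambda>x. \<Sum>q\<in>Q. beta q * Zk lam q x))"
        using lo unfolding e1'[unfolded B_def] T_def W_def B_def .
      show "(\<Sum>lam\<in>window S X gamma. l2_norm_sq mu (\<lambda>x. \<Sum>q\<in>Q. beta q * Zk lam q x))
                \<le> 2 * c * gamma * (\<Sum>q\<in>Q. (cmod (beta q))\<^sup>2) * X ^ (d - 1)"
        using hi unfolding e2'[unfolded B_def] T_def W_def B_def .
    qed
  qed
  show ?thesis
    by (rule exI[of _ "c/2"], rule conjI, fact, rule exI[of _ "2*c"], rule conjI, fact, rule main)
qed

end
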